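(* Let $A\in\mathbb{R}^{N\times N}$ be invertible and equilibrated in the $L^2$ norm (every row of $A$ has Euclidean norm $1$), and suppose $AA^T$ has at most $K$ nonzero elements in every row. Then for any invertible diagonal matrix $G\in\mathbb{R}^{N\times N}$, $$\kappa(A)=\|A\|_2\|A^{-1}\|_{S^4}\le\sqrt K\,\|G^{-1}A\|_2\|A^{-1}G\|_{S^4}=\sqrt K\,\kappa(G^{-1}A).$$
   Context: For invertible $B$, $\kappa(B):=\|B\|_2\|B^{-1}\|_{S^4}$, where $\|\cdot\|_2$ is the spectral norm and $\|M\|_{S^4}:=\left(\sum_n s_n^4\right)^{1/4}$ with $s_n$ the singular values of $M$. *)

theory Defs
  imports "HOL-Analysis.Analysis"
begin

definition spec_norm :: "real^'n^'m \<Rightarrow> real" where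
  "spec_norm M = onorm (\<lambda>x. M *v x)"

definition diag_mat :: "real^'n \<Rightarrow> real^'n^'n" where
  "diag_mat s = (\<chi> i j. if i = j then s $ i else 0)"

definition singular_values :: "real^'n^'n \<Rightarrow> real^'n" where
  "singular_values M = (SOME s. (\<forall>i. 0 \<le> s $ i) \<and>
     (\<exists>U V. orthogonal_matrix U \<and> orthogonal_matrix V \<and> M = U ** diag_mat s ** transpose V))"

definition schatten4 :: "real^'n^'n \<Rightarrow> real" where
  "schatten4 M = (\<Sum>i\<in>UNIV. (singular_values M $ i) ^ 4) powr (1/4)"

definition kappa :: "real^'n^'n \<Rightarrow> real" where
  "kappa B = spec_norm B * schatten4 (matrix_inv B)"

end

theory Submission
  imports Defs
begin


lemma sym_inner:
  fixes S :: "real^'n^'n"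
  assumes "transpose S = S"
  shows "u \<bullet> (S *v v) = (S *v u) \<bullet> v"
proof -
  have "u \<bullet> (S *v v) = (u v* S) \<bullet> v" by (simp add: dot_lmul_matrix)
  also have "u v* S = transpose S *v u" by simp
  finally show ?thesis using assms by simp
qed

lemma transp_inner:
  fixes M :: "real^'n^'m"
  shows "(M *v x) \<bullet> y = x \<bullet> (transpose M *v y)"
  by (metis dot_lmul_matrix vector_transpose_matrix)

lemma eig_exists:
  fixes S :: "real^'n^'n" and W :: "(real^'n) set"
  assumes sym: "transpose S = S" and W: "subspace W" and inv: "\<forall>x\<in>W. S *v x \<in> W"
    and ne: "W \<noteq> {0}"
  shows "\<exists>x\<in>W. norm x = 1 \<and> (\<exists>l. S *v x = l *\<^sub>R x)"
proof -
  define K where "K = W \<inter> sphere 0 1"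
  have cK: "compact K" unfolding K_def
    using closed_subspace[OF W] compact_sphere by blast
  obtain w where w: "w \<in> W" "w \<noteq> 0" using ne subspace_0[OF W] by blast
  have "w /\<^sub>R norm w \<in> K" using w W unfolding K_def
    by (simp add: subspace_scale)
  hence neK: "K \<noteq> {}" by blast
  have ct: "continuous_on K (\<lambda>x. x \<bullet> (S *v x))"
    by (intro continuous_intros linear_continuous_on matrix_vector_mul_bounded_linear)
  obtain x0 where x0K: "x0 \<in> K" and mx: "\<And>y. y \<in> K \<Longrightarrow> y \<bullet> (S *v y) \<le> x0 \<bullet> (S *v x0)"
    using continuous_attains_sup[OF cK neK ct] by blast
  define l where "l = x0 \<bullet> (S *v x0)"
  have x0W: "x0 \<in> W" and nx0: "norm x0 = 1" using x0K unfolding K_def by auto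
  have x0x0: "x0 \<bullet> x0 = 1" using nx0 by (simp add: dot_square_norm)
  have bound: "z \<bullet> (S *v z) \<le> l * (norm z)^2" if zW: "z \<in> W" for z
  proof (cases "z = 0")
    case True then show ?thesis by simp
  next
    case False
    have "z /\<^sub>R norm z \<in> K" using zW W False unfolding K_def by (simp add: subspace_scale)
    hence "(z /\<^sub>R norm z) \<bullet> (S *v (z /\<^sub>R norm z)) \<le> l" using mx l_def by blast
    hence "(z \<bullet> (S *v z)) / (norm z)^2 \<le> l"
      by (simp add: matrix_vector_mult_scaleR power2_eq_square divide_inverse mult_ac)
    thus ?thesis using False by (simp add: divide_le_eq mult.commute)
  qed
  define y where "y = S *v x0 - l *\<^sub>R x0"
  have yW: "y \<in> W" unfolding y_def using inv x0W W by (simp add: subspace_diff subspace_scale)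
  have xy: "x0 \<bullet> y = 0" unfolding y_def l_def using x0x0 by (simp add: inner_diff_right)
  have ySx: "y \<bullet> (S *v x0) = (norm y)^2"
  proof -
    have "S *v x0 = y + l *\<^sub>R x0" unfolding y_def by simp
    hence "y \<bullet> (S *v x0) = y \<bullet> y + l * (y \<bullet> x0)" by (simp add: inner_add_right)
    thus ?thesis using xy by (simp add: inner_commute dot_square_norm)
  qed
  define c where "c = y \<bullet> (S *v y)"
  define D where "D = l * (norm y)^2 - c"
  have quad: "2 * t * (norm y)^2 \<le> t^2 * D" for t
  proof -
    have "x0 + t *\<^sub>R y \<in> W" using x0W yW W by (simp add: subspace_add subspace_scale)
    from bound[OF this] have b: "(x0 + t *\<^sub>R y) \<bullet> (S *v (x0 + t *\<^sub>R y)) \<le> l * (norm (x0 + t *\<^sub>R y))^2" .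
    have e1: "(x0 + t *\<^sub>R y) \<bullet> (S *v (x0 + t *\<^sub>R y)) = l + 2 * t * (norm y)^2 + t^2 * c"
    proof -
      have s: "x0 \<bullet> (S *v y) = y \<bullet> (S *v x0)"
        using sym_inner[OF sym, of x0 y] by (simp add: inner_commute)
      show ?thesis
        by (simp add: matrix_vector_right_distrib matrix_vector_mult_scaleR inner_add_left inner_add_right
            s ySx l_def c_def power2_eq_square algebra_simps)
    qed
    have yx: "y \<bullet> x0 = 0" using xy by (simp add: inner_commute)
    have "(norm (x0 + t *\<^sub>R y))^2 = (x0 + t *\<^sub>R y) \<bullet> (x0 + t *\<^sub>R y)"
      by (simp add: dot_square_norm)
    also have "\<dots> = x0 \<bullet> x0 + t * (x0 \<bullet> y) + t * (y \<bullet> x0) + t * t * (y \<bullet> y)"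
      by (simp add: inner_add_left inner_add_right algebra_simps)
    also have "\<dots> = 1 + t^2 * (norm y)^2"
      by (simp add: xy yx x0x0 nx0 dot_square_norm power2_eq_square)
    finally have e2: "(norm (x0 + t *\<^sub>R y))^2 = 1 + t^2 * (norm y)^2" .
    show ?thesis using b e1 e2 unfolding D_def by (simp add: algebra_simps)
  qed
  have "y = 0"
  proof (rule ccontr)
    assume "y \<noteq> 0"
    hence ny: "(norm y)^2 > 0" by simp
    define t where "t = (norm y)^2 / (\<bar>D\<bar> + 1)"
    have tp: "t > 0" unfolding t_def using ny by (simp add: add_pos_nonneg)
    have "2 * t * (norm y)^2 \<le> t * (t * D)" using quad[of t] by (simp add: power2_eq_square mult.assoc)
    hence "2 * (norm y)^2 \<le> t * D" using tp by simp
    also have "t * D \<le> t * \<bar>D\<bar>" using tp by (simp add: mult_left_mono)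
    also have "t * \<bar>D\<bar> < (norm y)^2" unfolding t_def using ny
      by (simp add: divide_less_eq mult.commute)
    finally show False using ny by simp
  qed
  hence "S *v x0 = l *\<^sub>R x0" unfolding y_def by simp
  thus ?thesis using x0W nx0 by blast
qed


lemma spectral_sub:
  fixes S :: "real^'n^'n"
  assumes sym: "transpose S = S"
  shows "subspace W \<Longrightarrow> (\<forall>x\<in>W. S *v x \<in> W) \<Longrightarrow>
    \<exists>B. B \<subseteq> W \<and> pairwise orthogonal B \<and> (\<forall>x\<in>B. norm x = 1 \<and> (\<exists>l. S *v x = l *\<^sub>R x))
       \<and> W \<subseteq> span B"
proof (induction "dim W" arbitrary: W rule: less_induct)
  case less
  show ?case
  proof (cases "W = {0}")
    case True
    then show ?thesis by (intro exI[of _ "{}"]) auto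
  next
    case False
    obtain x0 l where x0W: "x0 \<in> W" and nx0: "norm x0 = 1" and ev: "S *v x0 = l *\<^sub>R x0"
      using eig_exists[OF sym less.prems(1) less.prems(2) False] by blast
    have x0x0: "x0 \<bullet> x0 = 1" using nx0 by (simp add: dot_square_norm)
    define W' where "W' = W \<inter> {y. orthogonal x0 y}"
    have sW': "subspace W'" unfolding W'_def
      using subspace_inter[OF less.prems(1) subspace_orthogonal_to_vector[of x0]] by simp
    have iW': "\<forall>x\<in>W'. S *v x \<in> W'"
    proof
      fix x assume "x \<in> W'"
      hence xW: "x \<in> W" and ox: "x0 \<bullet> x = 0" unfolding W'_def orthogonal_def by auto
      have "x0 \<bullet> (S *v x) = (S *v x0) \<bullet> x" by (rule sym_inner[OF sym])
      also have "\<dots> = 0" using ev ox by simp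
      finally show "S *v x \<in> W'" using less.prems(2) xW unfolding W'_def orthogonal_def by auto
    qed
    have "W' \<subset> W"
    proof -
      have "x0 \<notin> W'" using x0x0 unfolding W'_def orthogonal_def by auto
      thus ?thesis using x0W unfolding W'_def by auto
    qed
    hence "span W' \<subset> span W" using sW' less.prems(1) by (simp add: span_eq_iff[THEN iffD2])
    hence "dim W' < dim W" by (rule dim_psubset)
    from less.hyps[OF this sW' iW'] obtain B' where B': "B' \<subseteq> W'" "pairwise orthogonal B'"
      "\<forall>x\<in>B'. norm x = 1 \<and> (\<exists>l. S *v x = l *\<^sub>R x)" "W' \<subseteq> span B'" by blast
    show ?thesis
    proof (intro exI[of _ "insert x0 B'"] conjI)
      show "insert x0 B' \<subseteq> W" using x0W B'(1) unfolding W'_def by auto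
      show "pairwise orthogonal (insert x0 B')"
        using B'(1,2) unfolding W'_def by (auto simp: pairwise_insert orthogonal_commute)
      show "\<forall>x\<in>insert x0 B'. norm x = 1 \<and> (\<exists>l. S *v x = l *\<^sub>R x)" using B'(3) nx0 ev by auto
      show "W \<subseteq> span (insert x0 B')"
      proof
        fix w assume wW: "w \<in> W"
        define c where "c = x0 \<bullet> w"
        have "w - c *\<^sub>R x0 \<in> W'" unfolding W'_def orthogonal_def
          using wW x0W less.prems(1) x0x0 by (simp add: subspace_diff subspace_scale inner_diff_right c_def)
        hence "w - c *\<^sub>R x0 \<in> span (insert x0 B')" using B'(4) span_mono[of B' "insert x0 B'"] by blast
        moreover have "c *\<^sub>R x0 \<in> span (insert x0 B')" by (simp add: span_base span_scale)
        ultimately have "(w - c *\<^sub>R x0) + c *\<^sub>R x0 \<in> span (insert x0 B')" by (rule span_add)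
        thus "w \<in> span (insert x0 B')" by simp
      qed
    qed
  qed
qed


lemma spectral:
  fixes S :: "real^'n^'n"
  assumes sym: "transpose S = S"
  shows "\<exists>(f :: 'n \<Rightarrow> real^'n) (l :: 'n \<Rightarrow> real). (\<forall>i. norm (f i) = 1) \<and>
    (\<forall>i j. i \<noteq> j \<longrightarrow> f i \<bullet> f j = 0) \<and> (\<forall>i. S *v f i = l i *\<^sub>R f i)"
proof -
  obtain B where B: "pairwise orthogonal B" "\<forall>x\<in>B. norm x = 1 \<and> (\<exists>l. S *v x = l *\<^sub>R x)"
    "UNIV \<subseteq> span B"
    using spectral_sub[OF sym, of UNIV] by auto
  have "0 \<notin> B" using B(2) by auto
  hence ind: "independent B" using B(1) pairwise_orthogonal_independent by blast
  have spB: "span B = UNIV" using B(3) by auto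
  have "card B = dim B" using dim_eq_card_independent[OF ind] by simp
  also have "\<dots> = dim (span B)" by simp
  also have "\<dots> = CARD('n)" unfolding spB by simp
  finally have cB: "card B = CARD('n)" .
  have fB: "finite B" using ind finiteI_independent by blast
  obtain f where f: "bij_betw f (UNIV::'n set) B"
    using finite_same_card_bij[OF finite_class.finite_UNIV fB] cB by metis
  have fi: "f i \<in> B" for i using f by (auto simp: bij_betw_def)
  have n1: "norm (f i) = 1" for i using fi B(2) by auto
  have o: "f i \<bullet> f j = 0" if "i \<noteq> j" for i j
    using B(1) f that by (auto simp: pairwise_def bij_betw_def inj_on_def orthogonal_def)
  have "\<forall>i. \<exists>l. S *v f i = l *\<^sub>R f i" using fi B(2) by blast
  then obtain l where "\<And>i. S *v f i = l i *\<^sub>R f i" by metis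
  with n1 o show ?thesis by blast
qed




lemma diag_transpose[simp]: "transpose (diag_mat s) = diag_mat s"
  by (simp add: diag_mat_def transpose_def vec_eq_iff)

lemma mult_diag_right: "(X ** diag_mat h) $ i $ j = X $ i $ j * h $ j"
proof -
  have "(X ** diag_mat h) $ i $ j = (\<Sum>k\<in>UNIV. (if k = j then X $ i $ k * h $ j else 0))"
    unfolding diag_mat_def matrix_matrix_mult_def vec_lambda_beta by (rule sum.cong) auto
  thus ?thesis by simp
qed

lemma mult_diag_left: "(diag_mat h ** X) $ i $ j = h $ i * X $ i $ j"
proof -
  have "(diag_mat h ** X) $ i $ j = (\<Sum>k\<in>UNIV. (if k = i then h $ i * X $ i $ j else 0))"
    unfolding diag_mat_def matrix_matrix_mult_def vec_lambda_beta by (rule sum.cong) auto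
  thus ?thesis by simp
qed

lemma diag_diag: "diag_mat a ** diag_mat b = diag_mat (\<chi> i. a $ i * b $ i)"
  by (simp add: vec_eq_iff mult_diag_left) (simp add: diag_mat_def)

lemma trace_diag: "trace (diag_mat a) = (\<Sum>i\<in>UNIV. a $ i)"
  by (simp add: trace_def diag_mat_def)


lemma svd_exists:
  fixes M :: "real^'n^'n"
  assumes "invertible M"
  shows "\<exists>s. (\<forall>i. 0 \<le> s $ i) \<and>
     (\<exists>U V. orthogonal_matrix U \<and> orthogonal_matrix V \<and> M = U ** diag_mat s ** transpose V)"
proof -
  define S where "S = transpose M ** M"
  have sym: "transpose S = S" unfolding S_def by (simp add: matrix_transpose_mul)
  obtain f :: "'n \<Rightarrow> real^'n" and l :: "'n \<Rightarrow> real" where n1a: "\<forall>i. norm (f i) = 1" and oa: "\<forall>i j. i \<noteq> j \<longrightarrow> f i \<bullet> f j = 0"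
    and eva: "\<forall>i. S *v f i = l i *\<^sub>R f i"
    using spectral[OF sym] by blast
  have n1: "\<And>i. norm (f i) = 1" using n1a by blast
  have o: "\<And>i j. i \<noteq> j \<Longrightarrow> f i \<bullet> f j = 0" using oa by blast
  have ev: "\<And>i. S *v f i = l i *\<^sub>R f i" using eva by blast
  define V :: "real^'n^'n" where "V = (\<chi> i j. f j $ i)"
  define s :: "real^'n" where "s = (\<chi> j. norm (M *v f j))"
  define U :: "real^'n^'n" where "U = (\<chi> i j. (M *v f j) $ i / s $ j)"
  have inj: "inj ((*v) M)" by (rule inj_matrix_vector_mult[OF assms])
  have Mf0: "M *v f j \<noteq> 0" for j
  proof
    assume "M *v f j = 0"
    hence "M *v f j = M *v 0" by simp
    hence "f j = 0" by (rule injD[OF inj])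
    thus False using n1[of j] by simp
  qed
  have sp: "s $ j > 0" for j unfolding s_def using Mf0 by simp
  have colU: "column j U = (1 / s $ j) *\<^sub>R (M *v f j)" for j
    unfolding U_def column_def by (simp add: vec_eq_iff)
  have colV: "column j V = f j" for j unfolding V_def column_def by (simp add: vec_eq_iff)
  have MM: "(M *v f i) \<bullet> (M *v f j) = 0" if "i \<noteq> j" for i j
  proof -
    have "(M *v f i) \<bullet> (M *v f j) = f i \<bullet> (transpose M *v (M *v f j))" by (rule transp_inner)
    also have "\<dots> = f i \<bullet> (S *v f j)" unfolding S_def by (simp add: matrix_vector_mul_assoc)
    also have "\<dots> = 0" using ev o[OF that] by simp
    finally show ?thesis .
  qed
  have oU: "orthogonal_matrix U"
    unfolding orthogonal_matrix_orthonormal_columns colU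
  proof (intro conjI allI impI)
    fix i show "norm ((1 / s $ i) *\<^sub>R (M *v f i)) = 1" using sp[of i] unfolding s_def by simp
  next
    fix i j :: 'n assume "i \<noteq> j"
    thus "orthogonal ((1 / s $ i) *\<^sub>R (M *v f i)) ((1 / s $ j) *\<^sub>R (M *v f j))"
      using MM by (simp add: orthogonal_def)
  qed
  have oV: "orthogonal_matrix V"
    unfolding orthogonal_matrix_orthonormal_columns colV using n1 o by (simp add: orthogonal_def)
  have UM: "U ** diag_mat s = M ** V"
  proof -
    have "(U ** diag_mat s) $ i $ j = (M ** V) $ i $ j" for i j
    proof -
      have "(U ** diag_mat s) $ i $ j = U $ i $ j * s $ j" by (rule mult_diag_right)
      also have "\<dots> = (M *v f j) $ i" using sp[of j] by (simp add: U_def)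
      also have "\<dots> = (M ** V) $ i $ j" by (simp add: V_def matrix_matrix_mult_def matrix_vector_mult_def)
      finally show ?thesis .
    qed
    thus ?thesis by (simp add: vec_eq_iff)
  qed
  have "U ** diag_mat s ** transpose V = M ** (V ** transpose V)" by (simp add: UM matrix_mul_assoc)
  also have "\<dots> = M" using oV by (simp add: orthogonal_matrix_def)
  finally have "M = U ** diag_mat s ** transpose V" ..
  moreover have "\<forall>i. 0 \<le> s $ i" using sp less_imp_le by blast
  ultimately show ?thesis using oU oV by blast
qed




lemma trace_svd:
  fixes M U V :: "real^'n^'n"
  assumes oU: "orthogonal_matrix U" and oV: "orthogonal_matrix V"
    and M: "M = U ** diag_mat s ** transpose V"
  shows "(\<Sum>i\<in>UNIV. (s$i)^4) = trace ((transpose M ** M) ** (transpose M ** M))"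
proof -
  define D where "D = diag_mat s"
  have UU: "transpose U ** U = mat 1" using oU by (simp add: orthogonal_matrix_def)
  have VV: "transpose V ** V = mat 1" using oV by (simp add: orthogonal_matrix_def)
  have tM: "transpose M = V ** D ** transpose U"
    using M by (simp add: matrix_transpose_mul matrix_mul_assoc D_def)
  have MD: "M = U ** D ** transpose V" using M D_def by simp
  have "transpose M ** M = (V ** D ** transpose U) ** (U ** D ** transpose V)"
    by (simp only: tM MD[symmetric])
  also have "\<dots> = V ** D ** (transpose U ** U) ** D ** transpose V"
    by (simp add: matrix_mul_assoc)
  also have "\<dots> = V ** (D ** D) ** transpose V" by (simp add: UU matrix_mul_assoc)
  finally have P: "transpose M ** M = V ** (D ** D) ** transpose V" .
  have "(transpose M ** M) ** (transpose M ** M) = V ** (D ** D) ** (transpose V ** V) ** (D ** D) ** transpose V"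
    by (simp add: P matrix_mul_assoc)
  also have "\<dots> = V ** (D ** D ** D ** D) ** transpose V" by (simp add: VV matrix_mul_assoc)
  finally have PP: "(transpose M ** M) ** (transpose M ** M) = V ** (D ** D ** D ** D) ** transpose V" .
  have "trace (V ** (D ** D ** D ** D) ** transpose V) = trace (transpose V ** (V ** (D ** D ** D ** D)))"
    by (rule trace_mul_sym)
  also have "\<dots> = trace (D ** D ** D ** D)" by (simp add: matrix_mul_assoc VV)
  also have "\<dots> = trace (diag_mat (\<chi> i. (s $ i)^4))"
    unfolding D_def by (simp add: diag_diag power4_eq_xxxx mult.assoc)
  also have "\<dots> = (\<Sum>i\<in>UNIV. (s$i)^4)" by (simp add: trace_diag)
  finally show ?thesis using PP by simp
qed

definition Fr :: "real^'n^'n \<Rightarrow> real" where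
  "Fr M = (\<Sum>i\<in>UNIV. \<Sum>j\<in>UNIV. ((transpose M ** M) $ i $ j)^2)"

lemma trace_Fr: "trace ((transpose M ** M) ** (transpose M ** M)) = Fr (M :: real^'n^'n)"
proof -
  define P where "P = transpose M ** M"
  have sP: "P $ j $ i = P $ i $ j" for i j
    unfolding P_def by (simp add: matrix_matrix_mult_def transpose_def mult.commute)
  have "trace (P ** P) = (\<Sum>i\<in>UNIV. \<Sum>j\<in>UNIV. P $ i $ j * P $ j $ i)"
    by (simp add: trace_def matrix_matrix_mult_def)
  also have "\<dots> = (\<Sum>i\<in>UNIV. \<Sum>j\<in>UNIV. (P $ i $ j)^2)" by (simp add: sP power2_eq_square)
  finally show ?thesis unfolding Fr_def P_def .
qed

lemma schatten4_Fr:
  fixes M :: "real^'n^'n"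
  assumes "invertible M"
  shows "schatten4 M = Fr M powr (1/4)"
proof -
  let ?P = "\<lambda>s. (\<forall>i. 0 \<le> s $ i) \<and>
     (\<exists>U V. orthogonal_matrix U \<and> orthogonal_matrix V \<and> M = U ** diag_mat s ** transpose V)"
  have "?P (singular_values M)" unfolding singular_values_def
    by (rule someI_ex[OF svd_exists[OF assms]])
  then obtain U V where "orthogonal_matrix U" "orthogonal_matrix V"
    "M = U ** diag_mat (singular_values M) ** transpose V" by blast
  from trace_svd[OF this] show ?thesis unfolding schatten4_def trace_Fr by simp
qed




lemma spec_ge_row:
  fixes M :: "real^'n^'m"
  shows "norm (M $ i) \<le> spec_norm M"
proof -
  have bl: "bounded_linear (\<lambda>x. M *v x)" by simp
  have sn0: "0 \<le> spec_norm M" unfolding spec_norm_def by (rule onorm_pos_le[OF bl])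
  have b: "norm (M *v (M $ i)) \<le> spec_norm M * norm (M $ i)"
    unfolding spec_norm_def by (rule onorm[OF bl])
  have "(M *v (M $ i)) $ i = M $ i \<bullet> M $ i"
    by (simp add: matrix_vector_mult_def inner_vec_def)
  hence "(norm (M $ i))^2 = (M *v (M $ i)) $ i" by (simp add: dot_square_norm)
  also have "\<dots> \<le> norm (M *v (M $ i))" using component_le_norm_cart[of "M *v (M $ i)" i] by simp
  also have "\<dots> \<le> spec_norm M * norm (M $ i)" by (rule b)
  finally have "norm (M $ i) * norm (M $ i) \<le> spec_norm M * norm (M $ i)" by (simp add: power2_eq_square)
  thus ?thesis using sn0 by (cases "norm (M $ i) = 0") auto
qed

lemma matrix_inv_props:
  fixes A :: "real^'n^'n"
  assumes "invertible A"
  shows "A ** matrix_inv A = mat 1" "matrix_inv A ** A = mat 1"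
proof -
  have "\<exists>A'. A ** A' = mat 1 \<and> A' ** A = mat 1" using assms unfolding invertible_def by blast
  hence "A ** matrix_inv A = mat 1 \<and> matrix_inv A ** A = mat 1"
    unfolding matrix_inv_def by (rule someI_ex)
  thus "A ** matrix_inv A = mat 1" "matrix_inv A ** A = mat 1" by auto
qed

lemma matrix_inv_unique:
  fixes A B :: "real^'n^'n"
  assumes "invertible A" "A ** B = mat 1"
  shows "matrix_inv A = B"
proof -
  have "matrix_inv A = matrix_inv A ** (A ** B)" using assms(2) by simp
  also have "\<dots> = (matrix_inv A ** A) ** B" by (simp add: matrix_mul_assoc)
  also have "\<dots> = B" using matrix_inv_props(2)[OF assms(1)] by simp
  finally show ?thesis .
qed

lemma Fr_nonneg: "0 \<le> Fr M"
  unfolding Fr_def by (intro sum_nonneg) simp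

lemma Fr_diag:
  fixes X :: "real^'n^'n"
  assumes h: "\<And>i. \<bar>h $ i\<bar> \<le> m"
  shows "Fr (X ** diag_mat h) \<le> m^4 * Fr X"
proof -
  define Q where "Q = transpose X ** X"
  have "transpose (X ** diag_mat h) ** (X ** diag_mat h) = diag_mat h ** Q ** diag_mat h"
    unfolding Q_def by (simp add: matrix_transpose_mul matrix_mul_assoc)
  hence e: "(transpose (X ** diag_mat h) ** (X ** diag_mat h)) $ i $ j = h $ i * Q $ i $ j * h $ j" for i j
    by (simp add: mult_diag_right mult_diag_left)
  have hb: "(h $ i)^2 \<le> m^2" for i
  proof -
    have "\<bar>h $ i\<bar>^2 \<le> m^2" using h[of i] by (intro power_mono) auto
    thus ?thesis by simp
  qed
  have t: "(h $ i * Q $ i $ j * h $ j)^2 \<le> m^4 * (Q $ i $ j)^2" for i j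
  proof -
    have "(h $ i)^2 * (h $ j)^2 \<le> m^2 * m^2"
      using hb[of i] hb[of j] by (intro mult_mono) auto
    hence "(h $ i)^2 * (h $ j)^2 * (Q $ i $ j)^2 \<le> m^2 * m^2 * (Q $ i $ j)^2"
      by (intro mult_right_mono) auto
    thus ?thesis by (simp add: power_mult_distrib power4_eq_xxxx power2_eq_square mult_ac)
  qed
  have "Fr (X ** diag_mat h) = (\<Sum>i\<in>UNIV. \<Sum>j\<in>UNIV. (h $ i * Q $ i $ j * h $ j)^2)"
    unfolding Fr_def e ..
  also have "\<dots> \<le> (\<Sum>i\<in>UNIV. \<Sum>j\<in>UNIV. m^4 * (Q $ i $ j)^2)"
    by (intro sum_mono t)
  also have "\<dots> = m^4 * Fr X" unfolding Fr_def Q_def by (simp add: sum_distrib_left)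
  finally show ?thesis .
qed

lemma powr4_root:
  fixes m :: real assumes "0 \<le> m" shows "(m^4) powr (1/4) = m"
proof (cases "m = 0")
  case True then show ?thesis by simp
next
  case False
  hence "m > 0" using assms by simp
  have "(m^4) powr (1/4) = (m powr 4) powr (1/4)" using assms by simp
  also have "\<dots> = m powr (4 * (1/4))" by (rule powr_powr)
  also have "\<dots> = m" using \<open>m > 0\<close> by simp
  finally show ?thesis .
qed


lemma AAt_entry:
  fixes A :: "real^'n^'n"
  shows "(A ** transpose A) $ i $ j = A $ i \<bullet> A $ j"
  by (simp add: matrix_matrix_mult_def transpose_def inner_vec_def)

lemma quad_bound:
  fixes A :: "real^'n^'n" and K :: nat
  assumes rows: "\<And>i. norm (A $ i) = 1"
    and sp: "\<And>i. card {j. (A ** transpose A) $ i $ j \<noteq> 0} \<le> K"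
  shows "(norm (transpose A *v y))^2 \<le> real K * (norm y)^2"
proof -
  define P where "P = A ** transpose A"
  have Pe: "P $ i $ j = A $ i \<bullet> A $ j" for i j unfolding P_def by (rule AAt_entry)
  have Ps: "P $ j $ i = P $ i $ j" for i j unfolding Pe by (simp add: inner_commute)
  have Pb: "\<bar>P $ i $ j\<bar> \<le> 1" for i j
    unfolding Pe using Cauchy_Schwarz_ineq2[of "A $ i" "A $ j"] rows by simp
  have spP: "card {j. P $ i $ j \<noteq> 0} \<le> K" for i using sp unfolding P_def .
  have "(norm (transpose A *v y))^2 = (transpose A *v y) \<bullet> (transpose A *v y)"
    by (simp add: dot_square_norm)
  also have "\<dots> = y \<bullet> (transpose (transpose A) *v (transpose A *v y))" by (rule transp_inner)
  also have "\<dots> = y \<bullet> (P *v y)" by (simp only: transpose_transpose P_def matrix_vector_mul_assoc)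
  also have "\<dots> = (\<Sum>i\<in>UNIV. \<Sum>j\<in>UNIV. y $ i * P $ i $ j * y $ j)"
    by (simp add: inner_vec_def matrix_vector_mult_def sum_distrib_left mult_ac)
  also have "\<dots> \<le> (\<Sum>i\<in>UNIV. \<Sum>j\<in>UNIV. if P $ i $ j \<noteq> 0 then ((y $ i)^2 + (y $ j)^2) / 2 else 0)"
  proof (intro sum_mono)
    fix i j
    show "y $ i * P $ i $ j * y $ j \<le> (if P $ i $ j \<noteq> 0 then ((y $ i)^2 + (y $ j)^2) / 2 else 0)"
    proof (cases "P $ i $ j = 0")
      case True then show ?thesis by simp
    next
      case False
      have "y $ i * P $ i $ j * y $ j \<le> \<bar>y $ i * P $ i $ j * y $ j\<bar>" by simp
      also have "\<dots> = \<bar>y $ i\<bar> * \<bar>y $ j\<bar> * \<bar>P $ i $ j\<bar>" by (simp add: abs_mult mult_ac)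
      also have "\<dots> \<le> \<bar>y $ i\<bar> * \<bar>y $ j\<bar> * 1" using Pb[of i j] by (intro mult_left_mono) auto
      also have "\<dots> \<le> ((y $ i)^2 + (y $ j)^2) / 2"
        using sum_squares_bound[of "\<bar>y $ i\<bar>" "\<bar>y $ j\<bar>"] by simp
      finally show ?thesis using False by simp
    qed
  qed
  also have "\<dots> = (\<Sum>i\<in>UNIV. \<Sum>j\<in>UNIV. if P $ i $ j \<noteq> 0 then (y $ i)^2 / 2 else 0)
                  + (\<Sum>i\<in>UNIV. \<Sum>j\<in>UNIV. if P $ i $ j \<noteq> 0 then (y $ j)^2 / 2 else 0)"
    by (simp add: sum.distrib[symmetric] add_divide_distrib if_distrib cong: if_cong)
  also have "\<dots> \<le> real K * (norm y)^2"
  proof -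
    have c1: "(\<Sum>j\<in>UNIV. if P $ i $ j \<noteq> 0 then c else 0) = real (card {j. P $ i $ j \<noteq> 0}) * c" for i and c :: real
      by (simp add: sum.If_cases)
    have s1: "(\<Sum>i\<in>UNIV. \<Sum>j\<in>UNIV. if P $ i $ j \<noteq> 0 then (y $ i)^2 / 2 else 0) \<le> (\<Sum>i\<in>UNIV. real K * ((y $ i)^2 / 2))"
    proof (intro sum_mono)
      fix i
      show "(\<Sum>j\<in>UNIV. if P $ i $ j \<noteq> 0 then (y $ i)^2 / 2 else 0) \<le> real K * ((y $ i)^2 / 2)"
        unfolding c1 using spP[of i] by (intro mult_right_mono) auto
    qed
    have "(\<Sum>i\<in>UNIV. \<Sum>j\<in>UNIV. if P $ i $ j \<noteq> 0 then (y $ j)^2 / 2 else 0)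
        = (\<Sum>j\<in>UNIV. \<Sum>i\<in>UNIV. if P $ j $ i \<noteq> 0 then (y $ j)^2 / 2 else 0)"
      by (subst sum.swap) (simp add: Ps)
    also have "\<dots> \<le> (\<Sum>j\<in>UNIV. real K * ((y $ j)^2 / 2))"
    proof (intro sum_mono)
      fix j
      show "(\<Sum>i\<in>UNIV. if P $ j $ i \<noteq> 0 then (y $ j)^2 / 2 else 0) \<le> real K * ((y $ j)^2 / 2)"
        unfolding c1 using spP[of j] by (intro mult_right_mono) auto
    qed
    finally have s2: "(\<Sum>i\<in>UNIV. \<Sum>j\<in>UNIV. if P $ i $ j \<noteq> 0 then (y $ j)^2 / 2 else 0) \<le> (\<Sum>j\<in>UNIV. real K * ((y $ j)^2 / 2))" .
    have ny: "(norm y)^2 = (\<Sum>i\<in>UNIV. (y $ i)^2)"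
    proof -
      have "(norm y)^2 = y \<bullet> y" by (simp add: dot_square_norm)
      also have "\<dots> = (\<Sum>i\<in>UNIV. (y $ i)^2)" by (simp add: inner_vec_def power2_eq_square)
      finally show ?thesis .
    qed
    have "(\<Sum>i\<in>UNIV. real K * ((y $ i)^2 / 2)) + (\<Sum>j\<in>UNIV. real K * ((y $ j)^2 / 2)) = real K * (norm y)^2"
      unfolding ny by (simp add: sum_distrib_left[symmetric] sum_divide_distrib[symmetric])
    thus ?thesis using s1 s2 by linarith
  qed
  finally show ?thesis .
qed




lemma spec_le_sqrtK:
  fixes A :: "real^'n^'n" and K :: nat
  assumes rows: "\<And>i. norm (A $ i) = 1"
    and sp: "\<And>i. card {j. (A ** transpose A) $ i $ j \<noteq> 0} \<le> K"
  shows "spec_norm A \<le> sqrt (real K)"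
proof -
  have tb: "norm (transpose A *v z) \<le> sqrt (real K) * norm z" for z
  proof -
    have "norm (transpose A *v z) = sqrt ((norm (transpose A *v z))^2)" by simp
    also have "\<dots> \<le> sqrt (real K * (norm z)^2)"
      by (rule real_sqrt_le_mono[OF quad_bound[OF rows sp]])
    also have "\<dots> = sqrt (real K) * norm z" by (simp add: real_sqrt_mult)
    finally show ?thesis .
  qed
  have ab: "norm (A *v x) \<le> sqrt (real K) * norm x" for x
  proof -
    have "(norm (A *v x))^2 = (A *v x) \<bullet> (A *v x)" by (simp add: dot_square_norm)
    also have "\<dots> = x \<bullet> (transpose A *v (A *v x))" by (rule transp_inner)
    also have "\<dots> \<le> norm x * norm (transpose A *v (A *v x))" by (rule norm_cauchy_schwarz)
    also have "\<dots> \<le> norm x * (sqrt (real K) * norm (A *v x))"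
      by (intro mult_left_mono tb) simp
    finally have "norm (A *v x) * norm (A *v x) \<le> (sqrt (real K) * norm x) * norm (A *v x)"
      by (simp add: power2_eq_square mult_ac)
    thus ?thesis
      by (cases "norm (A *v x) = 0") (auto simp: mult_le_cancel_right)
  qed
  show ?thesis unfolding spec_norm_def by (rule onorm_le[OF ab])
qed

theorem lemma5:
  fixes A G :: "real^'n^'n" and K :: nat
  assumes "invertible A"
    and "\<And>i. norm (A $ i) = 1"
    and "\<And>i. card {j. (A ** transpose A) $ i $ j \<noteq> 0} \<le> K"
    and "invertible G"
    and "\<And>i j. i \<noteq> j \<Longrightarrow> G $ i $ j = 0"
  shows "kappa A = spec_norm A * schatten4 (matrix_inv A)
     \<and> kappa A \<le> sqrt (real K) * spec_norm (matrix_inv G ** A) * schatten4 (matrix_inv A ** G)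
     \<and> sqrt (real K) * spec_norm (matrix_inv G ** A) * schatten4 (matrix_inv A ** G)
         = sqrt (real K) * kappa (matrix_inv G ** A)"
proof -
  define g :: "real^'n" where "g = (\<chi> i. G $ i $ i)"
  have Gd: "G = diag_mat g" using assms(5) unfolding g_def diag_mat_def by (simp add: vec_eq_iff)
  have g0: "g $ i \<noteq> 0" for i
  proof
    assume z: "g $ i = 0"
    have "G ** matrix_inv G = mat 1" by (rule matrix_inv_props(1)[OF assms(4)])
    hence "(G ** matrix_inv G) $ i $ i = 1" by (simp add: mat_def)
    moreover have "(G ** matrix_inv G) $ i $ i = 0" unfolding Gd by (simp add: mult_diag_left z)
    ultimately show False by simp
  qed
  define h :: "real^'n" where "h = (\<chi> i. 1 / g $ i)"
  have "G ** diag_mat h = mat 1" unfolding Gd diag_diag h_def using g0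
    by (simp add: diag_mat_def mat_def vec_eq_iff)
  hence Gi: "matrix_inv G = diag_mat h" by (rule matrix_inv_unique[OF assms(4)])
  define Ai where "Ai = matrix_inv A"
  have AAi: "A ** Ai = mat 1" "Ai ** A = mat 1" unfolding Ai_def using matrix_inv_props[OF assms(1)] by auto
  define m where "m = spec_norm (matrix_inv G ** A)"
  have hm: "\<bar>h $ i\<bar> \<le> m" for i
  proof -
    have "(matrix_inv G ** A) $ i = h $ i *\<^sub>R A $ i"
      unfolding Gi by (simp add: vec_eq_iff mult_diag_left)
    hence "norm ((matrix_inv G ** A) $ i) = \<bar>h $ i\<bar>" using assms(2)[of i] by simp
    thus ?thesis using spec_ge_row[of "matrix_inv G ** A" i] unfolding m_def by simp
  qed
  have m0: "0 \<le> m" using hm[of undefined] by simp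
  have GGi: "G ** diag_mat h = mat 1" using matrix_inv_props(1)[OF assms(4)] Gi by simp
  have invAi: "invertible Ai" unfolding invertible_right_inverse using AAi(2) by blast
  have invAiG: "invertible (Ai ** G)" by (rule invertible_mult[OF invAi assms(4)])
  have AiE: "Ai = (Ai ** G) ** diag_mat h" using GGi by (simp add: matrix_mul_assoc[symmetric])
  have FrB: "Fr Ai \<le> m^4 * Fr (Ai ** G)"
    using Fr_diag[of h m "Ai ** G", OF hm] AiE by simp
  have SB: "schatten4 Ai \<le> m * schatten4 (Ai ** G)"
  proof -
    have "schatten4 Ai = Fr Ai powr (1/4)" by (rule schatten4_Fr[OF invAi])
    also have "\<dots> \<le> (m^4 * Fr (Ai ** G)) powr (1/4)"
      by (rule powr_mono2[OF _ Fr_nonneg FrB]) simp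
    also have "\<dots> = (m^4) powr (1/4) * Fr (Ai ** G) powr (1/4)"
      by (rule powr_mult)
    also have "\<dots> = m * schatten4 (Ai ** G)"
      by (simp add: powr4_root[OF m0] schatten4_Fr[OF invAiG])
    finally show ?thesis .
  qed
  have S0: "0 \<le> schatten4 Ai" by (simp add: schatten4_Fr[OF invAi])
  have sA: "spec_norm A \<le> sqrt (real K)" by (rule spec_le_sqrtK[OF assms(2,3)])
  have "kappa A = spec_norm A * schatten4 Ai" unfolding kappa_def Ai_def ..
  also have "\<dots> \<le> sqrt (real K) * schatten4 Ai" by (rule mult_right_mono[OF sA S0])
  also have "\<dots> \<le> sqrt (real K) * (m * schatten4 (Ai ** G))" by (rule mult_left_mono[OF SB]) simp
  finally have ineq: "kappa A \<le> sqrt (real K) * m * schatten4 (Ai ** G)" by (simp add: mult.assoc)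
  have "(matrix_inv G ** A) ** (Ai ** G) = matrix_inv G ** (A ** Ai) ** G" by (simp add: matrix_mul_assoc)
  also have "\<dots> = mat 1" using AAi(1) matrix_inv_props(2)[OF assms(4)] by simp
  finally have r: "(matrix_inv G ** A) ** (Ai ** G) = mat 1" .
  hence invGA: "invertible (matrix_inv G ** A)" unfolding invertible_right_inverse by blast
  have "matrix_inv (matrix_inv G ** A) = Ai ** G" by (rule matrix_inv_unique[OF invGA r])
  hence k2: "kappa (matrix_inv G ** A) = m * schatten4 (Ai ** G)" unfolding kappa_def m_def by simp
  show ?thesis
  proof (intro conjI)
    show "kappa A = spec_norm A * schatten4 (matrix_inv A)" unfolding kappa_def ..
    show "kappa A \<le> sqrt (real K) * spec_norm (matrix_inv G ** A) * schatten4 (matrix_inv A ** G)"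
      using ineq unfolding Ai_def m_def .
    show "sqrt (real K) * spec_norm (matrix_inv G ** A) * schatten4 (matrix_inv A ** G)
         = sqrt (real K) * kappa (matrix_inv G ** A)"
      unfolding k2 Ai_def m_def by (simp add: mult.assoc)
  qed
qed


end
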